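(* Let $(X,d)$ be a Polish metric space, viewed as a structure in the metric signature. Then $X$ has Scott rank $0$ if and only if $X$ is ultrahomogeneous.
   Context: A metric space $(X,d)$ is viewed as a first-order structure in the signature $\{R_q : q\in\mathbb{Q}^+\}$ of binary relation symbols, where $R_q(x,y)$ holds iff $d(x,y)<q$. For a structure $M$ and finite tuples $\bar a,\bar b$ of the same length from $M$, define $\bar a\equiv_\alpha\bar b$ by induction on ordinals $\alpha$: $\bar a\equiv_0\bar b$ iff $\bar a,\bar b$ have the same quantifier-free type; for limit $\alpha$, $\bar a\equiv_\alpha\bar b$ iff $\bar a\equiv_\beta\bar b$ for all $\beta<\alpha$; $\bar a\equiv_{\alpha+1}\bar b$ iff for every $x\in M$ there is $y\in M$ with $\bar a x\equiv_\alpha\bar b y$, and for every $y\in M$ there is $x\in M$ with $\bar a x\equiv_\alpha \bar b y$. The Scott rank of $M$ is the least ordinal $\alpha$ such that for all finite tuples $\bar a,\bar b$ from $M$, $\bar a\equiv_\alpha\bar b$ implies $\bar a\equiv_{\alpha+1}\bar b$. A metric space $X$ is ultrahomogeneous if every isometry between finite subsets of $X$ extends to an isometry of $X$ onto itself. *)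

theory Defs
  imports "HOL-Analysis.Analysis"
begin

definition polish_metric_space :: "'a set \<Rightarrow> ('a \<Rightarrow> 'a \<Rightarrow> real) \<Rightarrow> bool" where
  "polish_metric_space M d \<longleftrightarrow>
     Metric_space M d \<and> Metric_space.mcomplete M d \<and>
     separable_space (Metric_space.mtopology M d)"

text \<open>Same quantifier-free type in the signature {R_q : q rational, q > 0}, where
  R_q(x,y) iff d x y < q (atomic formulas are R_q(x_i,x_j) and x_i = x_j).
  Finite tuples are lists.\<close>
definition qf_equiv :: "('a \<Rightarrow> 'a \<Rightarrow> real) \<Rightarrow> 'a list \<Rightarrow> 'a list \<Rightarrow> bool" where
  "qf_equiv d as bs \<longleftrightarrow> length as = length bs \<and>
     (\<forall>i < length as. \<forall>j < length as.
        (as ! i = as ! j \<longleftrightarrow> bs ! i = bs ! j) \<and>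
        (\<forall>q::rat. q > 0 \<longrightarrow> (d (as ! i) (as ! j) < of_rat q \<longleftrightarrow> d (bs ! i) (bs ! j) < of_rat q)))"

text \<open>Successor step of the back-and-forth hierarchy: from \<equiv>_\<alpha> to \<equiv>_{\<alpha>+1}.\<close>
definition equiv_succ :: "'a set \<Rightarrow> ('a list \<Rightarrow> 'a list \<Rightarrow> bool) \<Rightarrow> 'a list \<Rightarrow> 'a list \<Rightarrow> bool" where
  "equiv_succ M E as bs \<longleftrightarrow>
     (\<forall>x\<in>M. \<exists>y\<in>M. E (as @ [x]) (bs @ [y])) \<and>
     (\<forall>y\<in>M. \<exists>x\<in>M. E (as @ [x]) (bs @ [y]))"

definition scott_rank_zero :: "'a set \<Rightarrow> ('a \<Rightarrow> 'a \<Rightarrow> real) \<Rightarrow> bool" where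
  "scott_rank_zero M d \<longleftrightarrow>
     (\<forall>as bs. set as \<subseteq> M \<and> set bs \<subseteq> M \<and> length as = length bs \<and> qf_equiv d as bs
        \<longrightarrow> equiv_succ M (qf_equiv d) as bs)"

definition isometry_on :: "('a \<Rightarrow> 'a \<Rightarrow> real) \<Rightarrow> 'a set \<Rightarrow> 'a set \<Rightarrow> ('a \<Rightarrow> 'a) \<Rightarrow> bool" where
  "isometry_on d A B f \<longleftrightarrow> f ` A = B \<and> (\<forall>x\<in>A. \<forall>y\<in>A. d (f x) (f y) = d x y)"

definition ultrahomogeneous :: "'a set \<Rightarrow> ('a \<Rightarrow> 'a \<Rightarrow> real) \<Rightarrow> bool" where
  "ultrahomogeneous M d \<longleftrightarrow>
     (\<forall>A B f. A \<subseteq> M \<and> B \<subseteq> M \<and> finite A \<and> isometry_on d A B f \<longrightarrow>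
        (\<exists>g. isometry_on d M M g \<and> (\<forall>x\<in>A. g x = f x)))"

end

theory Submission
  imports Defs
begin


lemma (in Metric_space) qf_equiv_iff:
  assumes "set as \<subseteq> M" "set bs \<subseteq> M"
  shows "qf_equiv d as bs \<longleftrightarrow> length as = length bs \<and>
    (\<forall>i<length as. \<forall>j<length as. d (as!i) (as!j) = d (bs!i) (bs!j))"
proof
  assume q: "qf_equiv d as bs"
  hence len: "length as = length bs" by (simp add: qf_equiv_def)
  have "d (as!i) (as!j) = d (bs!i) (bs!j)" if ij: "i < length as" "j < length as" for i j
  proof (rule ccontr)
    let ?x = "d (as!i) (as!j)" and ?y = "d (bs!i) (bs!j)"
    have Q: "\<And>q::rat. q > 0 \<Longrightarrow> (?x < of_rat q \<longleftrightarrow> ?y < of_rat q)"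
      using q ij unfolding qf_equiv_def by blast
    assume ne: "?x \<noteq> ?y"
    show False
    proof (cases "?x < ?y")
      case True
      then obtain r where r: "r \<in> \<rat>" "?x < r" "r < ?y" using Rats_dense_in_real by blast
      then obtain q where "r = of_rat q" by (auto simp: Rats_def)
      moreover have "q > 0"
      proof -
        have "0 < r" using r nonneg[of "as!i" "as!j"] by linarith
        thus ?thesis using \<open>r = of_rat q\<close> by simp
      qed
      ultimately show False using Q[of q] r by auto
    next
      case False
      hence "?y < ?x" using ne by auto
      then obtain r where r: "r \<in> \<rat>" "?y < r" "r < ?x" using Rats_dense_in_real by blast
      then obtain q where "r = of_rat q" by (auto simp: Rats_def)
      moreover have "q > 0"
      proof -
        have "0 < r" using r nonneg[of "bs!i" "bs!j"] by linarith
        thus ?thesis using \<open>r = of_rat q\<close> by simp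
      qed
      ultimately show False using Q[of q] r by auto
    qed
  qed
  thus "length as = length bs \<and> (\<forall>i<length as. \<forall>j<length as. d (as!i) (as!j) = d (bs!i) (bs!j))"
    using len by blast
next
  assume h: "length as = length bs \<and> (\<forall>i<length as. \<forall>j<length as. d (as!i) (as!j) = d (bs!i) (bs!j))"
  show "qf_equiv d as bs" unfolding qf_equiv_def
  proof (intro conjI allI impI)
    show "length as = length bs" using h by simp
    fix i j assume ij: "i < length as" "j < length as"
    have m: "as!i \<in> M" "as!j \<in> M" "bs!i \<in> M" "bs!j \<in> M" using ij h assms by (auto simp: subset_iff)
    have "as!i = as!j \<longleftrightarrow> d (as!i) (as!j) = 0" using m by simp
    also have "\<dots> \<longleftrightarrow> d (bs!i) (bs!j) = 0" using h ij by simp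
    also have "\<dots> \<longleftrightarrow> bs!i = bs!j" using m by simp
    finally show "as!i = as!j \<longleftrightarrow> bs!i = bs!j" .
    fix q :: rat
    show "d (as!i) (as!j) < of_rat q \<longleftrightarrow> d (bs!i) (bs!j) < of_rat q" using h ij by simp
  qed
qed


lemma (in Metric_space) iso_map_qf:
  assumes "isometry_on d M M g" "set xs \<subseteq> M"
  shows "qf_equiv d xs (map g xs)"
proof -
  have gM: "g ` M \<subseteq> M" using assms(1) by (simp add: isometry_on_def)
  have "set (map g xs) \<subseteq> M" using assms(2) gM by auto
  moreover have "\<forall>i<length xs. \<forall>j<length xs. d (xs!i) (xs!j) = d (map g xs!i) (map g xs!j)"
    using assms unfolding isometry_on_def by (auto simp: subset_iff)
  ultimately show ?thesis using qf_equiv_iff[OF assms(2)] by simp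
qed

lemma (in Metric_space) uh_imp_sr0:
  assumes U: "ultrahomogeneous M d"
  shows "scott_rank_zero M d"
  unfolding scott_rank_zero_def
proof (intro allI impI)
  fix as bs assume h: "set as \<subseteq> M \<and> set bs \<subseteq> M \<and> length as = length bs \<and> qf_equiv d as bs"
  hence asM: "set as \<subseteq> M" and bsM: "set bs \<subseteq> M" and len: "length as = length bs" by auto
  have D: "\<forall>i<length as. \<forall>j<length as. d (as!i) (as!j) = d (bs!i) (bs!j)"
    using h qf_equiv_iff[OF asM bsM] by blast
  let ?n = "length as"
  define f where "f x = bs ! (SOME i. i < ?n \<and> as!i = x)" for x
  have fi: "f (as!i) = bs!i" if "i < ?n" for i
  proof -
    define j where "j = (SOME j. j < ?n \<and> as!j = as!i)"
    have j: "j < ?n \<and> as!j = as!i" unfolding j_def by (rule someI[of _ i]) (use that in auto)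
    have m: "as!i \<in> M" "as!j \<in> M" "bs!i \<in> M" "bs!j \<in> M" using that j asM bsM len by (auto simp: subset_iff)
    have "d (bs!j) (bs!i) = 0" using D j that m by (metis zero)
    hence "bs!j = bs!i" using m by simp
    thus ?thesis unfolding f_def j_def[symmetric] .
  qed
  have "isometry_on d (set as) (set bs) f"
    unfolding isometry_on_def
  proof
    show "f ` set as = set bs"
    proof
      show "f ` set as \<subseteq> set bs" using fi len by (fastforce simp: in_set_conv_nth)
      show "set bs \<subseteq> f ` set as"
      proof
        fix y assume "y \<in> set bs"
        then obtain i where i: "i < length bs" "y = bs!i" by (auto simp: in_set_conv_nth)
        hence "y = f (as!i)" using fi len by simp
        moreover have "as!i \<in> set as" using i len by simp
        ultimately show "y \<in> f ` set as" by blast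
      qed
    qed
    show "\<forall>x\<in>set as. \<forall>y\<in>set as. d (f x) (f y) = d x y"
      using fi D by (auto simp: in_set_conv_nth)
  qed
  then obtain g where g: "isometry_on d M M g" "\<forall>x\<in>set as. g x = f x"
    using U asM bsM unfolding ultrahomogeneous_def by (meson List.finite_set)
  have bsg: "bs = map g as"
    using g(2) fi len by (simp add: list_eq_iff_nth_eq)
  show "equiv_succ M (qf_equiv d) as bs"
    unfolding equiv_succ_def
  proof (intro conjI ballI)
    fix x assume x: "x \<in> M"
    have "qf_equiv d (as @ [x]) (map g (as @ [x]))" using iso_map_qf[OF g(1), of "as@[x]"] asM x by simp
    moreover have "g x \<in> M" using g(1) x by (auto simp: isometry_on_def)
    ultimately show "\<exists>y\<in>M. qf_equiv d (as @ [x]) (bs @ [y])" using bsg by auto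
  next
    fix y assume y: "y \<in> M"
    then obtain x where x: "x \<in> M" "y = g x" using g(1) unfolding isometry_on_def by (metis imageE)
    have "qf_equiv d (as @ [x]) (map g (as @ [x]))" using iso_map_qf[OF g(1), of "as@[x]"] asM x by simp
    thus "\<exists>x\<in>M. qf_equiv d (as @ [x]) (bs @ [y])" using bsg x by auto
  qed
qed



definition good :: "'a set \<Rightarrow> ('a \<Rightarrow> 'a \<Rightarrow> real) \<Rightarrow> 'a list \<Rightarrow> 'a list \<Rightarrow> bool" where
  "good M d as bs \<longleftrightarrow> set as \<subseteq> M \<and> set bs \<subseteq> M \<and> length as = length bs \<and>
     (\<forall>i<length as. \<forall>j<length as. d (as!i) (as!j) = d (bs!i) (bs!j))"

lemma (in Metric_space) good_ext:
  assumes S: "scott_rank_zero M d" and g: "good M d as bs"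
  shows "x \<in> M \<Longrightarrow> \<exists>y\<in>M. good M d (as@[x]) (bs@[y])"
    and "y \<in> M \<Longrightarrow> \<exists>x\<in>M. good M d (as@[x]) (bs@[y])"
proof -
  have asM: "set as \<subseteq> M" and bsM: "set bs \<subseteq> M" using g by (auto simp: good_def)
  have q: "qf_equiv d as bs" using g qf_equiv_iff[OF asM bsM] by (simp add: good_def)
  hence E: "equiv_succ M (qf_equiv d) as bs" using S asM bsM g unfolding scott_rank_zero_def good_def by blast
  have conv: "qf_equiv d (as@[x]) (bs@[y]) \<Longrightarrow> x \<in> M \<Longrightarrow> y \<in> M \<Longrightarrow> good M d (as@[x]) (bs@[y])" for x y
    using qf_equiv_iff[of "as@[x]" "bs@[y]"] asM bsM by (simp add: good_def)
  show "x \<in> M \<Longrightarrow> \<exists>y\<in>M. good M d (as@[x]) (bs@[y])"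
    using E conv unfolding equiv_succ_def by blast
  show "y \<in> M \<Longrightarrow> \<exists>x\<in>M. good M d (as@[x]) (bs@[y])"
    using E conv unfolding equiv_succ_def by blast
qed

lemma (in Metric_space) back_forth:
  fixes e :: "nat \<Rightarrow> 'a"
  assumes S: "scott_rank_zero M d" and g0: "good M d as0 bs0" and e: "range e \<subseteq> M"
  shows "\<exists>a b. (\<forall>i. a i \<in> M \<and> b i \<in> M) \<and> (\<forall>i j. d (a i) (a j) = d (b i) (b j)) \<and>
     (\<forall>i<length as0. a i = as0!i \<and> b i = bs0!i) \<and> range e \<subseteq> range a \<and> range e \<subseteq> range b"
proof -
  define step where "step n p = (if even n
     then (fst p @ [e (n div 2)], snd p @ [SOME y. y \<in> M \<and> good M d (fst p @ [e (n div 2)]) (snd p @ [y])])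
     else (fst p @ [SOME x. x \<in> M \<and> good M d (fst p @ [x]) (snd p @ [e (n div 2)])], snd p @ [e (n div 2)]))"
    for n and p :: "'a list \<times> 'a list"
  define seq where "seq = rec_nat (as0, bs0) step"
  have seq0: "seq 0 = (as0, bs0)" and seqS: "seq (Suc n) = step n (seq n)" for n
    by (simp_all add: seq_def)
  let ?L = "length as0"
  have stepfst: "\<exists>u. fst (step n p) = fst p @ [u]" and stepsnd: "\<exists>u. snd (step n p) = snd p @ [u]" for n p
    by (auto simp: step_def)
  have G: "good M d (fst (seq n)) (snd (seq n))" for n
  proof (induction n)
    case 0 thus ?case using g0 by (simp add: seq0)
  next
    case (Suc n)
    show ?case
    proof (cases "even n")
      case True
      have "e (n div 2) \<in> M" using e by auto
      then have "\<exists>y. y \<in> M \<and> good M d (fst (seq n) @ [e (n div 2)]) (snd (seq n) @ [y])"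
        using good_ext(1)[OF S Suc] by blast
      from someI_ex[OF this] show ?thesis using True by (simp add: seqS step_def)
    next
      case False
      have "e (n div 2) \<in> M" using e by auto
      then have "\<exists>x. x \<in> M \<and> good M d (fst (seq n) @ [x]) (snd (seq n) @ [e (n div 2)])"
        using good_ext(2)[OF S Suc] by blast
      from someI_ex[OF this] show ?thesis using False by (simp add: seqS step_def)
    qed
  qed
  have lenfs: "length (fst (seq n)) = ?L + n \<and> length (snd (seq n)) = ?L + n" for n
  proof (induction n)
    case 0 show ?case using g0 by (simp add: seq0 good_def)
  next
    case (Suc n) 
    obtain u where "fst (seq (Suc n)) = fst (seq n) @ [u]" using stepfst seqS by metis
    moreover obtain v where "snd (seq (Suc n)) = snd (seq n) @ [v]" using stepsnd seqS by metis
    ultimately show ?case using Suc by simp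
  qed
  have lenf: "length (fst (seq n)) = ?L + n" and lens: "length (snd (seq n)) = ?L + n" for n
    using lenfs by auto
  have pre: "fst (seq (n+k)) ! i = fst (seq n) ! i \<and> snd (seq (n+k)) ! i = snd (seq n) ! i"
    if "i < ?L + n" for n k i
  proof (induction k)
    case 0 show ?case by simp
  next
    case (Suc k)
    obtain u where u: "fst (seq (Suc (n+k))) = fst (seq (n+k)) @ [u]" using stepfst seqS by metis
    obtain v where v: "snd (seq (Suc (n+k))) = snd (seq (n+k)) @ [v]" using stepsnd seqS by metis
    show ?case using Suc u v that lenf[of "n+k"] lens[of "n+k"] by (simp add: nth_append)
  qed
  define a where "a i = fst (seq (Suc i)) ! i" for i
  define b where "b i = snd (seq (Suc i)) ! i" for i
  have ab: "fst (seq n) ! i = a i \<and> snd (seq n) ! i = b i" if "i < ?L + n" for n i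
  proof (cases "n \<le> Suc i")
    case True
    then obtain k where "Suc i = n + k" using le_Suc_ex by blast
    thus ?thesis using pre[OF that, of k] by (simp add: a_def b_def)
  next
    case False
    then obtain k where k: "n = Suc i + k" using le_Suc_ex[of "Suc i" n] by auto
    thus ?thesis using pre[of i "Suc i" k] by (simp add: a_def b_def)
  qed
  have abM: "\<forall>i. a i \<in> M \<and> b i \<in> M"
  proof
    fix i
    have "i < ?L + Suc i" by simp
    thus "a i \<in> M \<and> b i \<in> M" using G[of "Suc i"] lenf[of "Suc i"] lens[of "Suc i"] ab[of i "Suc i"]
      unfolding good_def by (metis nth_mem subsetD)
  qed
  have dist: "\<forall>i j. d (a i) (a j) = d (b i) (b j)"
  proof (intro allI)
    fix i j
    let ?n = "Suc (max i j)"
    have "i < ?L + ?n" "j < ?L + ?n" by auto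
    thus "d (a i) (a j) = d (b i) (b j)" using G[of ?n] lenf[of ?n] ab[of i ?n] ab[of j ?n]
      unfolding good_def by metis
  qed
  have init: "\<forall>i<?L. a i = as0!i \<and> b i = bs0!i"
    using ab[of _ 0] by (simp add: seq0)
  have ea: "e n = a (?L + 2*n)" for n
  proof -
    have "fst (seq (Suc (2*n))) = fst (seq (2*n)) @ [e n]" by (simp add: seqS step_def)
    hence "fst (seq (Suc (2*n))) ! (?L + 2*n) = e n" using lenf[of "2*n"] by (simp add: nth_append)
    thus ?thesis using ab[of "?L + 2*n" "Suc (2*n)"] by simp
  qed
  have eb: "e n = b (?L + Suc (2*n))" for n
  proof -
    have "snd (seq (Suc (Suc (2*n)))) = snd (seq (Suc (2*n))) @ [e n]" by (simp add: seqS[of "Suc (2*n)"] step_def)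
    hence "snd (seq (Suc (Suc (2*n)))) ! (?L + Suc (2*n)) = e n" using lens[of "Suc (2*n)"] by (simp add: nth_append)
    thus ?thesis using ab[of "?L + Suc (2*n)" "Suc (Suc (2*n))"] by simp
  qed
  have "range e \<subseteq> range a" using ea by auto
  moreover have "range e \<subseteq> range b" using eb by (metis image_subsetI rangeI)
  ultimately show ?thesis using abM dist init by blast
qed



lemma (in Metric_space) dist_diff:
  assumes "x \<in> M" "y \<in> M" "z \<in> M"
  shows "\<bar>d x z - d y z\<bar> \<le> d x y"
  using triangle[of x y z] triangle[of y x z] assms commute[of x y] by linarith

lemma (in Metric_space) ext_exist:
  assumes C: "mcomplete" and abM: "\<forall>i. a i \<in> M \<and> b i \<in> M"
    and D: "\<forall>i j. d (a i) (a j) = d (b i) (b j)"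
    and dense: "\<forall>x\<in>M. \<forall>\<epsilon>>0. \<exists>i. d x (a i) < \<epsilon>" and x: "x \<in> M"
  shows "\<exists>y\<in>M. \<forall>i. d y (b i) = d x (a i)"
proof -
  have "\<forall>n. \<exists>i. d x (a i) < inverse (real (Suc n))" using dense x by simp
  then obtain \<sigma> where \<sigma>: "\<And>n. d x (a (\<sigma> n)) < inverse (real (Suc n))" by metis
  have inv_mono: "inverse (real (Suc n)) \<le> inverse (real (Suc N))" if "N \<le> n" for n N
    using that by (simp add: le_imp_inverse_le)
  have "MCauchy (b \<circ> \<sigma>)"
    unfolding MCauchy_def
  proof (intro conjI allI impI)
    show "range (b \<circ> \<sigma>) \<subseteq> M" using abM by auto
    fix \<epsilon> :: real assume "\<epsilon> > 0"
    then obtain N where N: "inverse (real (Suc N)) < \<epsilon>/2" using reals_Archimedean[of "\<epsilon>/2"] by auto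
    show "\<exists>N. \<forall>n n'. N \<le> n \<longrightarrow> N \<le> n' \<longrightarrow> d ((b \<circ> \<sigma>) n) ((b \<circ> \<sigma>) n') < \<epsilon>"
    proof (rule exI[of _ N], intro allI impI)
      fix n n' assume "N \<le> n" "N \<le> n'"
      have "d (a (\<sigma> n)) (a (\<sigma> n')) \<le> d (a (\<sigma> n)) x + d x (a (\<sigma> n'))"
        using triangle[of "a (\<sigma> n)" x "a (\<sigma> n')"] abM x by simp
      also have "\<dots> < \<epsilon>" using \<sigma>[of n] \<sigma>[of n'] inv_mono[OF \<open>N \<le> n\<close>] inv_mono[OF \<open>N \<le> n'\<close>] N
        commute[of x "a (\<sigma> n)"] by linarith
      finally show "d ((b \<circ> \<sigma>) n) ((b \<circ> \<sigma>) n') < \<epsilon>" using D by simp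
    qed
  qed
  then obtain y where "limitin mtopology (b \<circ> \<sigma>) y sequentially" using C mcomplete_def by blast
  hence L: "y \<in> M \<and> (\<forall>\<epsilon>>0. eventually (\<lambda>n. (b \<circ> \<sigma>) n \<in> M \<and> d ((b \<circ> \<sigma>) n) y < \<epsilon>) sequentially)"
    using limitin_metric by blast
  hence y: "y \<in> M" by blast
  have lim: "eventually (\<lambda>n. d (b (\<sigma> n)) y < \<epsilon>) sequentially" if "\<epsilon> > 0" for \<epsilon>
  proof -
    have "eventually (\<lambda>n. (b \<circ> \<sigma>) n \<in> M \<and> d ((b \<circ> \<sigma>) n) y < \<epsilon>) sequentially" using L that by blast
    thus ?thesis by (rule eventually_mono) simp
  qed
  have "d y (b i) = d x (a i)" for i
  proof (rule ccontr)
    assume ne: "d y (b i) \<noteq> d x (a i)"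
    define \<delta> where "\<delta> = \<bar>d y (b i) - d x (a i)\<bar>"
    have "\<delta> > 0" using ne by (simp add: \<delta>_def)
    then obtain N where N: "inverse (real (Suc N)) < \<delta>/2" using reals_Archimedean[of "\<delta>/2"] by auto
    have "eventually (\<lambda>n. d (b (\<sigma> n)) y < \<delta>/2 \<and> N \<le> n) sequentially"
      using eventually_conj[OF lim[of "\<delta>/2"] eventually_ge_at_top[of N]] \<open>\<delta> > 0\<close> by simp
    then obtain N' where N': "\<forall>n\<ge>N'. d (b (\<sigma> n)) y < \<delta>/2 \<and> N \<le> n"
      unfolding eventually_sequentially by blast
    obtain n where n: "d (b (\<sigma> n)) y < \<delta>/2" "N \<le> n" using N' by blast
    have 1: "\<bar>d y (b i) - d (b (\<sigma> n)) (b i)\<bar> \<le> d y (b (\<sigma> n))"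
      using dist_diff[of y "b (\<sigma> n)" "b i"] y abM by simp
    have 2: "\<bar>d x (a i) - d (a (\<sigma> n)) (a i)\<bar> \<le> d x (a (\<sigma> n))"
      using dist_diff[of x "a (\<sigma> n)" "a i"] x abM by simp
    have 3: "d (b (\<sigma> n)) (b i) = d (a (\<sigma> n)) (a i)" using D by simp
    have a1: "\<delta> \<le> d y (b (\<sigma> n)) + d x (a (\<sigma> n))"
      unfolding \<delta>_def using 1 2 3 by linarith
    have a2: "d y (b (\<sigma> n)) + d x (a (\<sigma> n)) < \<delta>"
      using n \<sigma>[of n] inv_mono[OF n(2)] N commute[of y "b (\<sigma> n)"] by linarith
    show False using a1 a2 by linarith
  qed
  thus ?thesis using y by blast
qed

lemma (in Metric_space) ext_unique:
  assumes bM: "\<forall>i. b i \<in> M" and dense: "\<forall>x\<in>M. \<forall>\<epsilon>>0. \<exists>i. d x (b i) < \<epsilon>"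
    and y: "y \<in> M" "\<forall>i. d y (b i) = c i" and y': "y' \<in> M" "\<forall>i. d y' (b i) = c i"
  shows "y = y'"
proof (rule ccontr)
  assume "y \<noteq> y'"
  hence "d y y' \<noteq> 0" using y y' by simp
  hence pos: "d y y' > 0" using nonneg[of y y'] by linarith
  then obtain i where i: "d y (b i) < d y y' / 2" using dense y by (meson half_gt_zero)
  have "d y y' \<le> d y (b i) + d (b i) y'" using triangle[of y "b i" y'] y y' bM by simp
  thus False using i y y' commute[of "b i" y'] by (simp; linarith)
qed



lemma (in Metric_space) sr0_imp_uh:
  assumes S: "scott_rank_zero M d" and C: "mcomplete" and sep: "separable_space mtopology"
  shows "ultrahomogeneous M d"
  unfolding ultrahomogeneous_def
proof (intro allI impI)
  fix A B f assume h: "A \<subseteq> M \<and> B \<subseteq> M \<and> finite A \<and> isometry_on d A B f"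
  hence AM: "A \<subseteq> M" and BM: "B \<subseteq> M" and fin: "finite A" and iso: "isometry_on d A B f" by auto
  show "\<exists>g. isometry_on d M M g \<and> (\<forall>x\<in>A. g x = f x)"
  proof (cases "M = {}")
    case True
    hence "A = {}" using AM by auto
    thus ?thesis using True by (auto simp: isometry_on_def)
  next
    case False
    obtain Cs where Cs: "countable Cs" "Cs \<subseteq> M" "mtopology closure_of Cs = M"
      using sep unfolding separable_space_def by auto
    have "Cs \<noteq> {}" using Cs(3) False by auto
    define e where "e = from_nat_into Cs"
    have rangee: "range e = Cs" using Cs(1) \<open>Cs \<noteq> {}\<close> by (simp add: e_def range_from_nat_into)
    have denseC: "\<exists>c\<in>Cs. d x c < \<epsilon>" if "x \<in> M" "\<epsilon> > 0" for x \<epsilon>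
    proof -
      have "x \<in> mtopology closure_of Cs" using Cs(3) that by simp
      thus ?thesis using that unfolding metric_closure_of by auto
    qed
    obtain as0 where as0: "set as0 = A" using fin finite_list by blast
    define bs0 where "bs0 = map f as0"
    have fA: "f ` A = B" and fd: "\<forall>x\<in>A. \<forall>y\<in>A. d (f x) (f y) = d x y" using iso by (auto simp: isometry_on_def)
    have g0: "good M d as0 bs0"
      unfolding good_def bs0_def using as0 AM BM fA fd by auto
    obtain a b where ab: "\<forall>i. a i \<in> M \<and> b i \<in> M" "\<forall>i j. d (a i) (a j) = d (b i) (b j)"
      "\<forall>i<length as0. a i = as0!i \<and> b i = bs0!i" "range e \<subseteq> range a" "range e \<subseteq> range b"
      using back_forth[OF S g0, of e] rangee Cs(2) by blast
    have ab': "\<forall>i j. d (b i) (b j) = d (a i) (a j)" using ab(2) by simp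
    have ba: "\<forall>i. b i \<in> M \<and> a i \<in> M" using ab(1) by simp
    have densea: "\<forall>x\<in>M. \<forall>\<epsilon>>0. \<exists>i. d x (a i) < \<epsilon>"
      using denseC ab(4) rangee by (metis imageE subsetD)
    have denseb: "\<forall>x\<in>M. \<forall>\<epsilon>>0. \<exists>i. d x (b i) < \<epsilon>"
      using denseC ab(5) rangee by (metis imageE subsetD)
    define g where "g x = (THE y. y \<in> M \<and> (\<forall>i. d y (b i) = d x (a i)))" for x
    have gprop: "g x \<in> M \<and> (\<forall>i. d (g x) (b i) = d x (a i))" if x: "x \<in> M" for x
    proof -
      obtain y where y: "y \<in> M" "\<forall>i. d y (b i) = d x (a i)" using ext_exist[OF C ab(1,2) densea x] by blast
      have "g x = y" unfolding g_def
      proof (rule the_equality)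
        show "y \<in> M \<and> (\<forall>i. d y (b i) = d x (a i))" using y by blast
        fix y' assume "y' \<in> M \<and> (\<forall>i. d y' (b i) = d x (a i))"
        thus "y' = y" using ext_unique[of b y' "\<lambda>i. d x (a i)" y] ab(1) denseb y by blast
      qed
      thus ?thesis using y by simp
    qed
    have gunique: "g x = y" if "x \<in> M" "y \<in> M" "\<forall>i. d y (b i) = d x (a i)" for x y
      using ext_unique[of b "g x" "\<lambda>i. d x (a i)" y] ab(1) denseb gprop[OF that(1)] that by blast
    have gd: "d (g x) (g x') = d x x'" if x: "x \<in> M" and x': "x' \<in> M" for x x'
    proof -
      have "\<bar>d (g x) (g x') - d x x'\<bar> \<le> 4 * \<epsilon>" if "\<epsilon> > 0" for \<epsilon>
      proof -
        obtain i where i: "d x (a i) < \<epsilon>" using densea x \<open>\<epsilon> > 0\<close> by blast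
        obtain j where j: "d x' (a j) < \<epsilon>" using densea x' \<open>\<epsilon> > 0\<close> by blast
        have gx: "g x \<in> M" "d (g x) (b i) = d x (a i)" using gprop[OF x] by auto
        have gx': "g x' \<in> M" "d (g x') (b j) = d x' (a j)" using gprop[OF x'] by auto
        have ai: "a i \<in> M" "a j \<in> M" "b i \<in> M" "b j \<in> M" using ab(1) by auto
        have t1: "d (g x) (g x') \<le> d (g x) (b i) + d (b i) (g x')" using triangle[of "g x" "b i" "g x'"] gx gx' ai by simp
        have t2: "d (b i) (g x') \<le> d (b i) (b j) + d (b j) (g x')" using triangle[of "b i" "b j" "g x'"] gx' ai by simp
        have t3: "d (a i) (a j) \<le> d (a i) x + d x (a j)" using triangle[of "a i" x "a j"] x ai by simp
        have t4: "d x (a j) \<le> d x x' + d x' (a j)" using triangle[of x x' "a j"] x x' ai by simp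
        have t5: "d x x' \<le> d x (a i) + d (a i) x'" using triangle[of x "a i" x'] x x' ai by simp
        have t6: "d (a i) x' \<le> d (a i) (a j) + d (a j) x'" using triangle[of "a i" "a j" x'] x' ai by simp
        have t7: "d (b i) (b j) \<le> d (b i) (g x) + d (g x) (b j)" using triangle[of "b i" "g x" "b j"] gx ai by simp
        have t8: "d (g x) (b j) \<le> d (g x) (g x') + d (g x') (b j)" using triangle[of "g x" "g x'" "b j"] gx gx' ai by simp
        have c: "d (b i) (g x') = d (g x') (b i)" "d (b j) (g x') = d (g x') (b j)" "d (a i) x = d x (a i)"
          "d (a j) x' = d x' (a j)" "d (a i) x' = d x' (a i)" "d (b i) (g x) = d (g x) (b i)"
          using commute by auto
        have e: "d (a i) (a j) = d (b i) (b j)" using ab(2) by simp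
        show ?thesis using t1 t2 t3 t4 t5 t6 t7 t8 c e gx(2) gx'(2) i j by linarith
      qed
      note E = this
      have "\<bar>d (g x) (g x') - d x x'\<bar> \<le> 0"
      proof (rule field_le_epsilon)
        fix e :: real assume "0 < e"
        hence "\<bar>d (g x) (g x') - d x x'\<bar> \<le> 4 * (e/4)" using E[of "e/4"] by simp
        thus "\<bar>d (g x) (g x') - d x x'\<bar> \<le> 0 + e" by simp
      qed
      thus ?thesis by simp
    qed
    have "g ` M = M"
    proof
      show "g ` M \<subseteq> M" using gprop by auto
      show "M \<subseteq> g ` M"
      proof
        fix y assume y: "y \<in> M"
        obtain x where x: "x \<in> M" "\<forall>i. d x (a i) = d y (b i)" using ext_exist[OF C ba ab' denseb y] by blast
        have "g x = y" using gunique[OF x(1) y] x(2) by simp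
        thus "y \<in> g ` M" using x(1) by blast
      qed
    qed
    hence isog: "isometry_on d M M g" using gd by (simp add: isometry_on_def)
    have "\<forall>x\<in>A. g x = f x"
    proof
      fix x assume "x \<in> A"
      then obtain k where k: "k < length as0" "x = as0!k" using as0 by (auto simp: in_set_conv_nth)
      have "a k = x" "b k = f x" using ab(3) k by (auto simp: bs0_def)
      moreover have "\<forall>i. d (b k) (b i) = d x (a i)" using ab(2) \<open>a k = x\<close> by metis
      moreover have xM: "x \<in> M" using AM \<open>x \<in> A\<close> by blast
      moreover have "b k \<in> M" using ab(1) by blast
      ultimately show "g x = f x" using gunique[of x "b k"] by simp
    qed
    thus ?thesis using isog by blast
  qed
qed

theorem mainTheorem1:
  fixes M :: "'a set" and d :: "'a \<Rightarrow> 'a \<Rightarrow> real"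
  assumes "polish_metric_space M d"
  shows "scott_rank_zero M d \<longleftrightarrow> ultrahomogeneous M d"
proof -
  interpret Metric_space M d using assms by (simp add: polish_metric_space_def)
  have C: "mcomplete" and sep: "separable_space mtopology"
    using assms by (simp_all add: polish_metric_space_def)
  show ?thesis
  proof
    assume "scott_rank_zero M d"
    thus "ultrahomogeneous M d" using sr0_imp_uh[OF _ C sep] by simp
  next
    assume "ultrahomogeneous M d"
    thus "scott_rank_zero M d" by (rule uh_imp_sr0)
  qed
qed
end
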